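(* Let $M,N,p\ge1$ and $(a,b)\in\mathbb Z_M^p\times\mathbb Z_N^p$ be such that the multisets $\{(a_y,b_y)\}_{y=1}^p$ and $\{(a_y,b_{y+1})\}_{y=1}^p$ are different. For $r\ge1$ let $$K_p^r(a,b)=\frac{1}{M^r}\#\{i\in\mathbb Z_M^r:\ (E_x)\text{ holds for all }x=1,\dots,r\}.$$ Then $K_p^r(a,b)\to0$ as $r\to\infty$.
   Context: Cyclic conventions: $i_{r+1}=i_1$, $b_{p+1}=b_1$. For $x\in\{1,\dots,r\}$, condition $(E_x)$ says that the multisets $\{(i_x+a_y,b_y),(i_{x+1}+a_y,b_{y+1}):y=1,\dots,p\}$ and $\{(i_x+a_y,b_{y+1}),(i_{x+1}+a_y,b_y):y=1,\dots,p\}$ of elements of $\mathbb Z_M\times\mathbb Z_N$ (counted with multiplicity) coincide. *)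

theory Defs
  imports "HOL-Analysis.Analysis" "HOL-Library.Multiset" "HOL-Library.FuncSet"
begin

text \<open>Elements of Z_M are represented by naturals in {0..<M}; sequences indexed
  by {1..p} are represented 0-based as functions on {0..<p}, with cyclic successor
  y \<mapsto> (y+1) mod p.\<close>

definition multiset_ab :: "nat \<Rightarrow> (nat \<Rightarrow> nat) \<Rightarrow> (nat \<Rightarrow> nat) \<Rightarrow> (nat \<times> nat) multiset" where
  "multiset_ab p a b = image_mset (\<lambda>y. (a y, b y)) (mset [0..<p])"

definition multiset_ab_shift :: "nat \<Rightarrow> (nat \<Rightarrow> nat) \<Rightarrow> (nat \<Rightarrow> nat) \<Rightarrow> (nat \<times> nat) multiset" where
  "multiset_ab_shift p a b = image_mset (\<lambda>y. (a y, b ((y + 1) mod p))) (mset [0..<p])"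

definition cond_E :: "nat \<Rightarrow> nat \<Rightarrow> nat \<Rightarrow> nat \<Rightarrow> (nat \<Rightarrow> nat) \<Rightarrow> (nat \<Rightarrow> nat) \<Rightarrow> (nat \<Rightarrow> nat) \<Rightarrow> nat \<Rightarrow> bool" where
  "cond_E M N p r a b i x \<longleftrightarrow>
     (let ix = i x; ix' = i ((x + 1) mod r) in
       image_mset (\<lambda>y. ((ix + a y) mod M, b y)) (mset [0..<p])
       + image_mset (\<lambda>y. ((ix' + a y) mod M, b ((y + 1) mod p))) (mset [0..<p])
     = image_mset (\<lambda>y. ((ix + a y) mod M, b ((y + 1) mod p))) (mset [0..<p])
       + image_mset (\<lambda>y. ((ix' + a y) mod M, b y)) (mset [0..<p]))"

definition K :: "nat \<Rightarrow> nat \<Rightarrow> nat \<Rightarrow> (nat \<Rightarrow> nat) \<Rightarrow> (nat \<Rightarrow> nat) \<Rightarrow> nat \<Rightarrow> real" where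
  "K M N p a b r =
     real (card {i \<in> {0..<r} \<rightarrow>\<^sub>E {0..<M}. \<forall>x<r. cond_E M N p r a b i x}) / real M ^ r"

end

theory Submission
  imports Defs
begin

definition Am :: "nat \<Rightarrow> nat \<Rightarrow> (nat\<Rightarrow>nat) \<Rightarrow> (nat\<Rightarrow>nat) \<Rightarrow> nat \<Rightarrow> (nat\<times>nat) multiset" where
  "Am M p a b u = image_mset (\<lambda>y. ((u + a y) mod M, b y)) (mset [0..<p])"
definition Cm :: "nat \<Rightarrow> nat \<Rightarrow> (nat\<Rightarrow>nat) \<Rightarrow> (nat\<Rightarrow>nat) \<Rightarrow> nat \<Rightarrow> (nat\<times>nat) multiset" where
  "Cm M p a b u = image_mset (\<lambda>y. ((u + a y) mod M, b ((y+1) mod p))) (mset [0..<p])"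
definition Rl :: "nat \<Rightarrow> nat \<Rightarrow> (nat\<Rightarrow>nat) \<Rightarrow> (nat\<Rightarrow>nat) \<Rightarrow> nat \<Rightarrow> nat \<Rightarrow> bool" where
  "Rl M p a b u v \<longleftrightarrow> Am M p a b u + Cm M p a b v = Cm M p a b u + Am M p a b v"

lemma cond_E_iff: "cond_E M N p r a b i x \<longleftrightarrow> Rl M p a b (i x) (i ((x+1) mod r))"
  by (simp add: cond_E_def Let_def Rl_def Am_def Cm_def)

lemma Rl_refl: "Rl M p a b u u" by (simp add: Rl_def add.commute)
lemma Rl_sym: "Rl M p a b u v \<Longrightarrow> Rl M p a b v u" by (simp add: Rl_def add.commute)
lemma Rl_trans: "Rl M p a b u v \<Longrightarrow> Rl M p a b v w \<Longrightarrow> Rl M p a b u w"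
proof -
  assume h1: "Rl M p a b u v" and h2: "Rl M p a b v w"
  let ?A = "Am M p a b" and ?C = "Cm M p a b"
  have "(?A u + ?C v) + (?A v + ?C w) = (?C u + ?A v) + (?C v + ?A w)"
    using h1 h2 unfolding Rl_def by simp
  hence "(?A u + ?C w) + (?C v + ?A v) = (?C u + ?A w) + (?C v + ?A v)"
    by (simp add: ac_simps)
  thus ?thesis unfolding Rl_def by simp
qed

lemma image_mset_sum: "finite A \<Longrightarrow> image_mset f (mset_set A) = (\<Sum>x\<in>A. {#f x#})"
  by (induction A rule: finite_induct) auto

lemma perm_mod:
  assumes "(M::nat) > 0"
  shows "image_mset (\<lambda>u. (u + c) mod M) (mset_set {0..<M}) = mset_set {0..<M}"
proof -
  have surj: "(\<lambda>u. (u + c) mod M) ` {0..<M} = {0..<M}"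
  proof
    show "(\<lambda>u. (u + c) mod M) ` {0..<M} \<subseteq> {0..<M}" using assms by auto
    show "{0..<M} \<subseteq> (\<lambda>u. (u + c) mod M) ` {0..<M}"
    proof
      fix s assume s: "s \<in> {0..<M}"
      define u where "u = (s + (M - c mod M)) mod M"
      have "(u + c) mod M = (s + (M - c mod M) + c) mod M" unfolding u_def by (simp add: mod_add_left_eq)
      also have "s + (M - c mod M) + c = s + M + (c - c mod M)"
        using mod_le_divisor[OF assms, of c] mod_less_eq_dividend[of c M] by linarith
      also have "(s + M + (c - c mod M)) mod M = s"
        using s by (simp add: minus_mod_eq_mult_div)
      finally show "s \<in> (\<lambda>u. (u + c) mod M) ` {0..<M}"
        using assms unfolding u_def by (intro image_eqI[of _ _ u]) (auto simp: u_def)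
    qed
  qed
  have "inj_on (\<lambda>u. (u + c) mod M) {0..<M}"
    by (rule eq_card_imp_inj_on) (auto simp: surj)
  thus ?thesis using image_mset_mset_set surj by metis
qed


lemma sum_gen:
  assumes "(M::nat) > 0"
  shows "(\<Sum>u\<in>{0..<M}. image_mset (\<lambda>y. ((u + a y) mod M, f y)) (mset [0..<p]))
       = (\<Sum>y\<in>{0..<p}. image_mset (\<lambda>s. (s, f y)) (mset_set {0..<M}))"
proof -
  have "(\<Sum>u\<in>{0..<M}. image_mset (\<lambda>y. ((u + a y) mod M, f y)) (mset [0..<p]))
      = (\<Sum>u\<in>{0..<M}. \<Sum>y\<in>{0..<p}. {#((u + a y) mod M, f y)#})"
    by (simp add: mset_upt image_mset_sum)
  also have "\<dots> = (\<Sum>y\<in>{0..<p}. \<Sum>u\<in>{0..<M}. {#((u + a y) mod M, f y)#})"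
    by (rule sum.swap)
  also have "\<dots> = (\<Sum>y\<in>{0..<p}. image_mset (\<lambda>u. ((u + a y) mod M, f y)) (mset_set {0..<M}))"
    by (simp add: image_mset_sum)
  also have "\<dots> = (\<Sum>y\<in>{0..<p}. image_mset (\<lambda>s. (s, f y)) (image_mset (\<lambda>u. (u + a y) mod M) (mset_set {0..<M})))"
    by (simp add: multiset.map_comp o_def)
  also have "\<dots> = (\<Sum>y\<in>{0..<p}. image_mset (\<lambda>s. (s, f y)) (mset_set {0..<M}))"
    using perm_mod[OF assms] by simp
  finally show ?thesis .
qed

lemma sum_AC:
  assumes "(M::nat) > 0" "p > 0"
  shows "(\<Sum>u\<in>{0..<M}. Am M p a b u) = (\<Sum>u\<in>{0..<M}. Cm M p a b u)"
proof -
  define G where "G t = image_mset (\<lambda>s. (s, t)) (mset_set {0..<M})" for t :: nat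
  have "(\<Sum>u\<in>{0..<M}. Am M p a b u) = (\<Sum>y\<in>{0..<p}. G (b y))"
    unfolding Am_def G_def by (rule sum_gen[OF assms(1)])
  moreover have "(\<Sum>u\<in>{0..<M}. Cm M p a b u) = (\<Sum>y\<in>{0..<p}. G (b ((y+1) mod p)))"
    unfolding Cm_def G_def by (rule sum_gen[OF assms(1)])
  moreover have "(\<Sum>y\<in>{0..<p}. G (b ((y+1) mod p))) = (\<Sum>y\<in>{0..<p}. G (b y))"
  proof -
    have im: "(\<lambda>y. (y + 1) mod p) ` {0..<p} = {0..<p}"
      using perm_mod[OF assms(2), of 1]
      by (metis finite_atLeastLessThan finite_imageI finite_set_mset_mset_set set_image_mset)
    have inj: "inj_on (\<lambda>y. (y + 1) mod p) {0..<p}"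
      by (rule eq_card_imp_inj_on) (simp, subst im, simp)
    show ?thesis using sum.reindex[OF inj, of "\<lambda>y. G (b y)"] im by (simp add: o_def)
  qed
  ultimately show ?thesis by simp
qed

lemma not_all_rel:
  assumes "(M::nat) > 0" "p > 0" "\<forall>y<p. a y < M"
    and "multiset_ab p a b \<noteq> multiset_ab_shift p a b"
  shows "\<exists>v<M. \<not> Rl M p a b 0 v"
proof (rule ccontr)
  assume "\<not> ?thesis"
  hence all: "\<forall>v<M. Rl M p a b 0 v" by blast
  let ?A = "Am M p a b" and ?C = "Cm M p a b"
  have "\<forall>z. count (?A 0) z = count (?C 0) z"
  proof
    fix z
    have eq: "\<And>v. v \<in> {0..<M} \<Longrightarrow> count (?A 0) z + count (?C v) z = count (?C 0) z + count (?A v) z"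
      using all unfolding Rl_def by (metis atLeastLessThan_iff count_union)
    have "(\<Sum>v\<in>{0..<M}. count (?A 0) z + count (?C v) z) = (\<Sum>v\<in>{0..<M}. count (?C 0) z + count (?A v) z)"
      using eq by (rule sum.cong[OF refl])
    hence "M * count (?A 0) z + count (\<Sum>v\<in>{0..<M}. ?C v) z = M * count (?C 0) z + count (\<Sum>v\<in>{0..<M}. ?A v) z"
      by (simp add: sum.distrib count_sum)
    hence "M * count (?A 0) z = M * count (?C 0) z" using sum_AC[OF assms(1,2), of a b] by simp
    thus "count (?A 0) z = count (?C 0) z" using assms(1) by simp
  qed
  hence "?A 0 = ?C 0" by (simp add: multiset_eq_iff)
  moreover have "?A 0 = multiset_ab p a b"
    unfolding Am_def multiset_ab_def using assms(3) by (intro image_mset_cong) auto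
  moreover have "?C 0 = multiset_ab_shift p a b"
    unfolding Cm_def multiset_ab_shift_def using assms(3) by (intro image_mset_cong) auto
  ultimately show False using assms(4) by simp
qed


lemma card_bound:
  assumes "(M::nat) > 0" "p > 0" "\<forall>y<p. a y < M"
    and "multiset_ab p a b \<noteq> multiset_ab_shift p a b" and "r > 0"
  shows "card {i \<in> {0..<r} \<rightarrow>\<^sub>E {0..<M}. \<forall>x<r. cond_E M N p r a b i x} \<le> M * (M - 1) ^ r"
proof -
  obtain v0 where v0: "v0 < M" "\<not> Rl M p a b 0 v0" using not_all_rel[OF assms(1-4)] by blast
  define cl where "cl u = {v \<in> {0..<M}. Rl M p a b u v}" for u
  have clc: "card (cl u) \<le> M - 1" if "u < M" for u
  proof -
    have "cl u \<noteq> {0..<M}"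
    proof
      assume "cl u = {0..<M}"
      hence "0 \<in> cl u" "v0 \<in> cl u" using assms(1) v0 by simp_all
      hence "Rl M p a b u 0" "Rl M p a b u v0" unfolding cl_def by simp_all
      thus False using v0 Rl_sym[of M p a b u 0] Rl_trans[of M p a b 0 u v0] by blast
    qed
    hence "cl u \<subset> {0..<M}" unfolding cl_def by auto
    hence "card (cl u) < M" using psubset_card_mono[of "{0..<M}" "cl u"] by simp
    thus ?thesis by simp
  qed
  have sub: "{i \<in> {0..<r} \<rightarrow>\<^sub>E {0..<M}. \<forall>x<r. cond_E M N p r a b i x}
      \<subseteq> (\<Union>u\<in>{0..<M}. PiE {0..<r} (\<lambda>_. cl u))"
  proof
    fix i assume i: "i \<in> {i \<in> {0..<r} \<rightarrow>\<^sub>E {0..<M}. \<forall>x<r. cond_E M N p r a b i x}"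
    hence ip: "i \<in> {0..<r} \<rightarrow>\<^sub>E {0..<M}" and ce: "\<forall>x<r. Rl M p a b (i x) (i ((x+1) mod r))"
      using cond_E_iff by auto
    have "x < r \<longrightarrow> Rl M p a b (i 0) (i x)" for x
    proof (induction x)
      case 0 show ?case by (simp add: Rl_refl)
    next
      case (Suc x)
      show ?case
      proof
        assume "Suc x < r"
        hence "Rl M p a b (i x) (i (Suc x))" using ce[rule_format, of x] by simp
        thus "Rl M p a b (i 0) (i (Suc x))" using Suc \<open>Suc x < r\<close> Rl_trans[of M p a b "i 0" "i x" "i (Suc x)"] by simp
      qed
    qed
    hence "i \<in> PiE {0..<r} (\<lambda>_. cl (i 0))" using ip unfolding cl_def PiE_def Pi_def by auto
    moreover have "i 0 \<in> {0..<M}" using ip assms(5) by auto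
    ultimately show "i \<in> (\<Union>u\<in>{0..<M}. PiE {0..<r} (\<lambda>_. cl u))" by blast
  qed
  have "card {i \<in> {0..<r} \<rightarrow>\<^sub>E {0..<M}. \<forall>x<r. cond_E M N p r a b i x}
      \<le> card (\<Union>u\<in>{0..<M}. PiE {0..<r} (\<lambda>_. cl u))"
    by (rule card_mono[OF _ sub]) (auto simp: cl_def intro!: finite_PiE)
  also have "\<dots> \<le> (\<Sum>u\<in>{0..<M}. card (PiE {0..<r} (\<lambda>_. cl u)))"
    by (rule card_UN_le) simp
  also have "\<dots> = (\<Sum>u\<in>{0..<M}. card (cl u) ^ r)"
    by (simp add: card_PiE)
  also have "\<dots> \<le> (\<Sum>u\<in>{0..<M}. (M - 1) ^ r)"
    by (rule sum_mono) (use clc in \<open>simp only: atLeastLessThan_iff, metis power_mono zero_le\<close>)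
  also have "\<dots> = M * (M - 1) ^ r" by simp
  finally show ?thesis .
qed

theorem proposition5p3:
  fixes M N p :: nat and a b :: "nat \<Rightarrow> nat"
  assumes "M \<ge> 1" and "N \<ge> 1" and "p \<ge> 1"
    and "\<forall>y<p. a y < M" and "\<forall>y<p. b y < N"
    and "multiset_ab p a b \<noteq> multiset_ab_shift p a b"
  shows "(\<lambda>r. K M N p a b r) \<longlonglongrightarrow> 0"
proof (rule Lim_null_comparison)
  have M0: "real M > 0" using assms(1) by simp
  show "\<forall>\<^sub>F r in sequentially. norm (K M N p a b r) \<le> real M * ((real M - 1) / real M) ^ r"
  proof (rule eventually_sequentiallyI[of 1])
    fix r :: nat assume r: "r \<ge> 1"
    have cb: "real (card {i \<in> {0..<r} \<rightarrow>\<^sub>E {0..<M}. \<forall>x<r. cond_E M N p r a b i x}) \<le> real M * (real M - 1) ^ r"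
    proof -
      have "card {i \<in> {0..<r} \<rightarrow>\<^sub>E {0..<M}. \<forall>x<r. cond_E M N p r a b i x} \<le> M * (M - 1) ^ r"
        using card_bound[of M p a b r N] assms r by simp
      hence "real (card {i \<in> {0..<r} \<rightarrow>\<^sub>E {0..<M}. \<forall>x<r. cond_E M N p r a b i x}) \<le> real (M * (M - 1) ^ r)"
        by (simp only: of_nat_le_iff)
      thus ?thesis using assms(1) by (simp add: of_nat_diff)
    qed
    have "norm (K M N p a b r) = real (card {i \<in> {0..<r} \<rightarrow>\<^sub>E {0..<M}. \<forall>x<r. cond_E M N p r a b i x}) / real M ^ r"
      unfolding K_def by simp
    also have "\<dots> \<le> real M * (real M - 1) ^ r / real M ^ r"
      using cb M0 by (simp add: divide_right_mono)
    also have "\<dots> = real M * ((real M - 1) / real M) ^ r" by (simp add: power_divide)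
    finally show "norm (K M N p a b r) \<le> real M * ((real M - 1) / real M) ^ r" .
  qed
  have "((\<lambda>r. ((real M - 1) / real M) ^ r) \<longlonglongrightarrow> 0)"
    by (rule LIMSEQ_power_zero) (use M0 in \<open>simp add: divide_simps\<close>)
  thus "(\<lambda>r. real M * ((real M - 1) / real M) ^ r) \<longlonglongrightarrow> 0"
    by (rule tendsto_mult_right_zero)
qed

end
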